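(* For all integers $k\ge 2$ and $n\ge 1$, $$\mathrm{spt}(k-1)'_{do}(n-1)-\mathrm{spt}k'_{do}(n)=\mathrm{spt}(k-1)'_{do}(n-2k+1)+p'_{do}(n-2k+1),$$ and $$\mathrm{spt}k_{do}(n)+\mathrm{spt}(k-1)_{do}(n-1)=\mathrm{spt}(k-1)_{do}(n-2k+1)+2p_{de}(n-k)+p_{do}(n-2k+1).$$
   Context: For a partition $\pi$, $s(\pi)$ is its smallest part. For $j\ge1$, $\mathrm{Spt}j_{do}(n)$ is the set of partitions $\pi$ of $n$ in which $s(\pi)$ occurs exactly $j$ times and the remaining parts (those larger than $s(\pi)$) are pairwise distinct and each has parity different from that of $s(\pi)$. $B_0(j,n)$ (resp. $B_1(j,n)$) is the number of $\pi\in\mathrm{Spt}j_{do}(n)$ whose number of parts greater than $s(\pi)$ is even (resp. odd). $\mathrm{spt}j_{do}(n)=B_0(j,n)+B_1(j,n)$ and $\mathrm{spt}j'_{do}(n)=B_0(j,n)-B_1(j,n)$; all of these are $0$ for $n\le 0$. $p_{de}(n)$ (resp. $p_{do}(n)$) is the number of partitions of $n$ into distinct even (resp. distinct odd) parts; $p'_{do}(n)$ is the number of partitions of $n$ into distinct odd parts with an even number of parts minus the number with an odd number of parts. These three functions equal $1$ at $n=0$ and $0$ for $n<0$. *)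

theory Defs
  imports Main "HOL-Library.Multiset"
begin

text \<open>Arguments n are integers; all counting functions vanish for n \<le> 0
  (resp. n < 0 for p_de, p_do, p'_do, which equal 1 at n = 0).\<close>

definition is_partition :: "nat \<Rightarrow> nat multiset \<Rightarrow> bool" where
  "is_partition m \<pi> \<longleftrightarrow> (\<forall>x\<in>#\<pi>. 0 < x) \<and> sum_mset \<pi> = m"

definition smallest_part :: "nat multiset \<Rightarrow> nat" where
  "smallest_part \<pi> = Min (set_mset \<pi>)"

definition larger_parts :: "nat multiset \<Rightarrow> nat" where
  "larger_parts \<pi> = size (filter_mset (\<lambda>x. smallest_part \<pi> < x) \<pi>)"

definition Spt_do :: "nat \<Rightarrow> nat \<Rightarrow> nat multiset set" where
  "Spt_do j m = {\<pi>. is_partition m \<pi> \<and> \<pi> \<noteq> {#} \<and>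
      count \<pi> (smallest_part \<pi>) = j \<and>
      (\<forall>x\<in>#\<pi>. smallest_part \<pi> < x \<longrightarrow>
          count \<pi> x = 1 \<and> (odd x \<longleftrightarrow> \<not> odd (smallest_part \<pi>)))}"

definition B0 :: "nat \<Rightarrow> int \<Rightarrow> nat" where
  "B0 j n = (if n \<le> 0 then 0 else card {\<pi> \<in> Spt_do j (nat n). even (larger_parts \<pi>)})"

definition B1 :: "nat \<Rightarrow> int \<Rightarrow> nat" where
  "B1 j n = (if n \<le> 0 then 0 else card {\<pi> \<in> Spt_do j (nat n). odd (larger_parts \<pi>)})"

definition spt_do :: "nat \<Rightarrow> int \<Rightarrow> nat" where
  "spt_do j n = B0 j n + B1 j n"

definition spt'_do :: "nat \<Rightarrow> int \<Rightarrow> int" where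
  "spt'_do j n = int (B0 j n) - int (B1 j n)"

text \<open>Partitions into distinct parts are represented as finite sets of positive naturals.\<close>
definition p_de :: "int \<Rightarrow> nat" where
  "p_de n = (if n < 0 then 0 else
     card {A :: nat set. finite A \<and> (\<forall>x\<in>A. 0 < x \<and> even x) \<and> \<Sum>A = nat n})"

definition p_do :: "int \<Rightarrow> nat" where
  "p_do n = (if n < 0 then 0 else
     card {A :: nat set. finite A \<and> (\<forall>x\<in>A. odd x) \<and> \<Sum>A = nat n})"

definition p'_do :: "int \<Rightarrow> int" where
  "p'_do n = (if n < 0 then 0 else
     int (card {A :: nat set. finite A \<and> (\<forall>x\<in>A. odd x) \<and> \<Sum>A = nat n \<and> even (card A)})
   - int (card {A :: nat set. finite A \<and> (\<forall>x\<in>A. odd x) \<and> \<Sum>A = nat n \<and> odd (card A)}))"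

end

theory Submission
  imports Defs "HOL-Library.Multiset"
begin

definition TT :: "nat \<Rightarrow> int \<Rightarrow> bool \<Rightarrow> (nat \<times> nat set) set" where
"TT j n b = {(s,D). 0<s \<and> finite D \<and> (\<forall>x\<in>D. s<x \<and> (odd x \<longleftrightarrow> \<not> odd s)) \<and> int (j*s + \<Sum>D) = n \<and> (even (card D) \<longleftrightarrow> b)}"

definition EE :: "int \<Rightarrow> bool \<Rightarrow> nat set set" where
"EE n b = {D. finite D \<and> (\<forall>x\<in>D. 0<x \<and> even x) \<and> int(\<Sum>D) = n \<and> (even (card D) \<longleftrightarrow> b)}"

definition ODS :: "int \<Rightarrow> bool \<Rightarrow> nat set set" where
"ODS n b = {D. finite D \<and> (\<forall>x\<in>D. odd x) \<and> int(\<Sum>D) = n \<and> (even (card D) \<longleftrightarrow> b)}"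

definition O3 :: "int \<Rightarrow> bool \<Rightarrow> nat set set" where
"O3 n b = {D. finite D \<and> (\<forall>x\<in>D. odd x \<and> 1 < x) \<and> int(\<Sum>D) = n \<and> (even (card D) \<longleftrightarrow> b)}"

declare of_nat_sum[simp del]

lemma le_sum_nat: "finite D \<Longrightarrow> x \<in> D \<Longrightarrow> x \<le> (\<Sum>D::nat)"
  by (metis member_le_sum zero_le)

lemma fin_sets: "finite {D::nat set. finite D \<and> \<Sum>D = m}"
proof (rule finite_subset[of _ "Pow {..m}"])
  show "{D::nat set. finite D \<and> \<Sum>D = m} \<subseteq> Pow {..m}"
    using le_sum_nat by fastforce
qed auto

lemma fin_sets_int: "finite {D::nat set. finite D \<and> int(\<Sum>D) = n}"
  by (rule finite_subset[OF _ fin_sets[of "nat n"]]) (auto simp del: of_nat_sum)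

lemma fin_EE: "finite (EE n b)" unfolding EE_def
  by (rule finite_subset[OF _ fin_sets_int[of n]]) (auto simp del: of_nat_sum)
lemma fin_OD: "finite (ODS n b)" unfolding ODS_def
  by (rule finite_subset[OF _ fin_sets_int[of n]]) (auto simp del: of_nat_sum)
lemma fin_O3: "finite (O3 n b)" unfolding O3_def
  by (rule finite_subset[OF _ fin_sets_int[of n]]) (auto simp del: of_nat_sum)

lemma fin_TT: assumes "j \<ge> 1" shows "finite (TT j n b)"
proof (rule finite_subset[of _ "{..nat n} \<times> Pow {..nat n}"])
  show "TT j n b \<subseteq> {..nat n} \<times> Pow {..nat n}"
  proof
    fix p assume "p \<in> TT j n b"
    then obtain s D where p: "p = (s,D)" and s: "0<s" and f: "finite D" and e: "int (j*s + \<Sum>D) = n"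
      unfolding TT_def by blast
    have "s \<le> j*s" using \<open>j\<ge>1\<close> by simp
    have en: "nat n = j*s + \<Sum>D" using e by (metis nat_int)
    hence "s \<le> nat n" using \<open>s \<le> j*s\<close> by linarith
    moreover have "\<forall>x\<in>D. x \<le> nat n" using en le_sum_nat[OF f] by force
    ultimately show "p \<in> {..nat n} \<times> Pow {..nat n}" using p by auto
  qed
qed auto

lemma mem_TT: "(s,D) \<in> TT j n b \<longleftrightarrow> 0<s \<and> finite D \<and> (\<forall>x\<in>D. s<x \<and> (odd x \<longleftrightarrow> \<not> odd s)) \<and> int (j*s + \<Sum>D) = n \<and> (even (card D) \<longleftrightarrow> b)"
  by (simp add: TT_def)
lemma mem_EE: "D \<in> EE n b \<longleftrightarrow> finite D \<and> (\<forall>x\<in>D. 0<x \<and> even x) \<and> int(\<Sum>D) = n \<and> (even (card D) \<longleftrightarrow> b)"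
  by (simp add: EE_def)
lemma mem_ODS: "D \<in> ODS n b \<longleftrightarrow> finite D \<and> (\<forall>x\<in>D. odd x) \<and> int(\<Sum>D) = n \<and> (even (card D) \<longleftrightarrow> b)"
  by (simp add: ODS_def)
lemma mem_O3: "D \<in> O3 n b \<longleftrightarrow> finite D \<and> (\<forall>x\<in>D. odd x \<and> 1 < x) \<and> int(\<Sum>D) = n \<and> (even (card D) \<longleftrightarrow> b)"
  by (simp add: O3_def)

lemma ev_gt1: "even (x::nat) \<Longrightarrow> 0<x \<Longrightarrow> Suc 0 < x" by presburger
lemma odd_gt1: "odd (x::nat) \<Longrightarrow> x \<noteq> 1 \<Longrightarrow> Suc 0 < x" by presburger

lemma L1: "card {p\<in>TT j n b. fst p = 1} = card (EE (n - int j) b)"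
proof (rule bij_betw_same_card[of snd])
  show "bij_betw snd {p\<in>TT j n b. fst p = 1} (EE (n - int j) b)"
  proof (rule bij_betw_byWitness[where f'="\<lambda>D. (1,D)"])
    show "\<forall>a\<in>{p \<in> TT j n b. fst p = 1}. (1, snd a) = a" by (simp add: prod_eq_iff)
    show "\<forall>a'\<in>EE (n - int j) b. snd (1, a') = a'" by simp
    show "snd ` {p \<in> TT j n b. fst p = 1} \<subseteq> EE (n - int j) b"
    proof (rule image_subsetI)
      fix p assume a: "p \<in> {p \<in> TT j n b. fst p = 1}"
      obtain s D where p: "p = (s,D)" by fastforce
      have s: "s = 1" using a p by simp
      have m: "(s,D) \<in> TT j n b" using a unfolding p by blast
      have f: "finite D" and D: "\<forall>x\<in>D. s<x \<and> (odd x \<longleftrightarrow> \<not> odd s)"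
        and e: "int (j*s + \<Sum>D) = n" and c: "even (card D) \<longleftrightarrow> b" using m unfolding mem_TT by blast+
      have D2: "\<forall>x\<in>D. 0 < x \<and> even x" using D s by auto
      have e2: "int (\<Sum>D) = n - int j" using e s by simp
      show "snd p \<in> EE (n - int j) b" unfolding mem_EE p snd_conv using f D2 e2 c by blast
    qed
    show "(\<lambda>D. (1, D)) ` EE (n - int j) b \<subseteq> {p \<in> TT j n b. fst p = 1}"
    proof (rule image_subsetI)
      fix D assume a: "D \<in> EE (n - int j) b"
      have f: "finite D" and D: "\<forall>x\<in>D. 0 < x \<and> even x"
        and e: "int (\<Sum>D) = n - int j" and c: "even (card D) \<longleftrightarrow> b" using a unfolding mem_EE by blast+
      have D2: "\<forall>x\<in>D. (1::nat)<x \<and> (odd x \<longleftrightarrow> \<not> odd (1::nat))" using D ev_gt1 by fastforce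
      have e2: "int (j*1 + \<Sum>D) = n" using e by simp
      have "(1,D) \<in> TT j n b" unfolding mem_TT using f D2 e2 c by simp
      then show "(1,D) \<in> {p \<in> TT j n b. fst p = 1}" by simp
    qed
  qed
qed

lemma L2: "card {p\<in>TT j n b. fst p = 2} = card (O3 (n - 2 * int j) b)"
proof (rule bij_betw_same_card[of snd])
  show "bij_betw snd {p\<in>TT j n b. fst p = 2} (O3 (n - 2 * int j) b)"
  proof (rule bij_betw_byWitness[where f'="\<lambda>D. (2,D)"])
    show "\<forall>a\<in>{p \<in> TT j n b. fst p = 2}. (2, snd a) = a" by (simp add: prod_eq_iff)
    show "\<forall>a'\<in>O3 (n - 2 * int j) b. snd (2, a') = a'" by simp
    show "snd ` {p \<in> TT j n b. fst p = 2} \<subseteq> O3 (n - 2 * int j) b"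
    proof (rule image_subsetI)
      fix p assume a: "p \<in> {p \<in> TT j n b. fst p = 2}"
      obtain s D where p: "p = (s,D)" by fastforce
      have s: "s = 2" using a p by simp
      have m: "(s,D) \<in> TT j n b" using a unfolding p by blast
      have f: "finite D" and D: "\<forall>x\<in>D. s<x \<and> (odd x \<longleftrightarrow> \<not> odd s)"
        and e: "int (j*s + \<Sum>D) = n" and c: "even (card D) \<longleftrightarrow> b" using m unfolding mem_TT by blast+
      have D2: "\<forall>x\<in>D. odd x \<and> 1 < x"
      proof
        fix x assume "x \<in> D" then have "2 < x" "odd x \<longleftrightarrow> \<not> odd (2::nat)" using D s by auto
        then show "odd x \<and> 1 < x" by simp
      qed
      have e2: "int (\<Sum>D) = n - 2 * int j" using e s by simp
      show "snd p \<in> O3 (n - 2 * int j) b" unfolding mem_O3 p snd_conv using f D2 e2 c by blast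
    qed
    show "(\<lambda>D. (2, D)) ` O3 (n - 2 * int j) b \<subseteq> {p \<in> TT j n b. fst p = 2}"
    proof (rule image_subsetI)
      fix D assume a: "D \<in> O3 (n - 2 * int j) b"
      have f: "finite D" and D: "\<forall>x\<in>D. odd x \<and> 1 < x"
        and e: "int (\<Sum>D) = n - 2 * int j" and c: "even (card D) \<longleftrightarrow> b" using a unfolding mem_O3 by blast+
      have D2: "\<forall>x\<in>D. (2::nat)<x \<and> (odd x \<longleftrightarrow> \<not> odd (2::nat))"
      proof
        fix x assume "x \<in> D" then have "odd x" "1 < x" using D by auto
        then show "(2::nat)<x \<and> (odd x \<longleftrightarrow> \<not> odd (2::nat))" by presburger
      qed
      have e2: "int (j*2 + \<Sum>D) = n" using e by simp
      have "(2,D) \<in> TT j n b" unfolding mem_TT using f D2 e2 c by simp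
      then show "(2,D) \<in> {p \<in> TT j n b. fst p = 2}" by simp
    qed
  qed
qed

lemma L3: "card {p\<in>TT (Suc j) n b. 3 \<le> fst p} = card {p\<in>TT j (n - 2 * int j - 1) (\<not>b). Suc (fst p) \<in> snd p}"
proof (rule bij_betw_same_card[of "\<lambda>(t,D). (t-2, insert (t-1) D)"])
  let ?A = "{p\<in>TT (Suc j) n b. 3 \<le> fst p}"
  let ?B = "{p\<in>TT j (n - 2 * int j - 1) (\<not>b). Suc (fst p) \<in> snd p}"
  let ?f = "\<lambda>(t,D). (t-2, insert (t-1) D)"
  let ?g = "\<lambda>(s,D). (s+2, D - {s+1})"
  have Ainfo: "3 \<le> t \<and> finite D \<and> (\<forall>x\<in>D. t<x \<and> (odd x \<longleftrightarrow> \<not> odd t)) \<and>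
        int (Suc j*t + \<Sum>D) = n \<and> (even (card D) \<longleftrightarrow> b)" if "(t,D) \<in> ?A" for t D
  proof -
    have m: "(t,D) \<in> TT (Suc j) n b" and t: "3 \<le> t" using that by auto
    show ?thesis using m t unfolding mem_TT by simp
  qed
  have Binfo: "0 < s \<and> finite D \<and> (\<forall>x\<in>D. s<x \<and> (odd x \<longleftrightarrow> \<not> odd s)) \<and>
        int (j*s + \<Sum>D) = n - 2 * int j - 1 \<and> (even (card D) \<longleftrightarrow> \<not> b) \<and> s+1 \<in> D" if "(s,D) \<in> ?B" for s D
  proof -
    have m: "(s,D) \<in> TT j (n - 2 * int j - 1) (\<not>b)" and t: "Suc s \<in> D" using that by auto
    show ?thesis using m t unfolding mem_TT by simp
  qed
  show "bij_betw ?f ?A ?B"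
  proof (rule bij_betw_byWitness[where f'="?g"])
    show "\<forall>a\<in>?A. ?g (?f a) = a"
    proof
      fix p assume a: "p \<in> ?A"
      obtain t D where p: "p = (t,D)" by fastforce
      have "(t,D) \<in> ?A" using a p by simp
      note I = Ainfo[OF this]
      have lt: "\<forall>x\<in>D. t<x" using I[THEN conjunct2, THEN conjunct2, THEN conjunct1] by auto
      have nd: "t - 1 \<notin> D"
      proof
        assume "t - 1 \<in> D" with lt have "t < t - 1" by blast
        then show False by simp
      qed
      have "t - 2 + 2 = t" "t - 2 + 1 = t - 1" using I[THEN conjunct1] by auto
      then show "?g (?f p) = p" using nd p by simp
    qed
    show "\<forall>a\<in>?B. ?f (?g a) = a"
    proof
      fix p assume a: "p \<in> ?B"
      obtain s D where p: "p = (s,D)" by fastforce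
      have "(s,D) \<in> ?B" using a p by simp
      from Binfo[OF this] have I: "s+1 \<in> D" by simp
      then show "?f (?g p) = p" using p by (simp add: insert_absorb)
    qed
    show "?f ` ?A \<subseteq> ?B"
    proof (rule image_subsetI)
      fix p assume a: "p \<in> ?A"
      obtain t D where p: "p = (t,D)" by fastforce
      have aa: "(t,D) \<in> ?A" using a p by simp
      have t: "3 \<le> t" and f: "finite D" and D: "\<forall>x\<in>D. t<x \<and> (odd x \<longleftrightarrow> \<not> odd t)"
        and e: "int (Suc j*t + \<Sum>D) = n" and c: "even (card D) \<longleftrightarrow> b"
        using Ainfo[OF aa] by auto
      have nd: "t - 1 \<notin> D"
      proof
        assume "t - 1 \<in> D" with D have "t < t - 1" by blast
        then show False by simp
      qed
      have c2: "card (insert (t-1) D) = Suc (card D)" using nd f by simp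
      have s2: "\<Sum>(insert (t-1) D) = (t-1) + \<Sum>D" using nd f by simp
      have D2: "\<forall>x\<in>insert (t-1) D. t-2<x \<and> (odd x \<longleftrightarrow> \<not> odd (t-2))"
      proof
        fix x assume "x \<in> insert (t-1) D"
        then show "t-2<x \<and> (odd x \<longleftrightarrow> \<not> odd (t-2))"
        proof
          assume "x = t - 1" then show ?thesis using t by presburger
        next
          assume "x \<in> D" then have "t<x" "odd x \<longleftrightarrow> \<not> odd t" using D by auto
          then show ?thesis using t by presburger
        qed
      qed
      have e2: "int (j*(t-2) + \<Sum>(insert (t-1) D)) = n - 2 * int j - 1"
      proof -
        define u where "u = t - 2"
        have u: "t = u + 2" using t u_def by simp
        have "int (Suc j*(u+2) + \<Sum>D) = n" using e u by simp
        moreover have "j*(t-2) + \<Sum>(insert (t-1) D) = j*u + (u+1) + \<Sum>D" using s2 u by simp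
        ultimately show ?thesis by (simp add: algebra_simps)
      qed
      have "(t-2, insert (t-1) D) \<in> TT j (n - 2 * int j - 1) (\<not>b)"
        unfolding mem_TT using t f D2 e2 c c2 by simp
      moreover have "Suc (t-2) \<in> insert (t-1) D"
      proof -
        have "Suc (t-2) = t-1" using t by arith
        then show ?thesis by simp
      qed
      ultimately show "?f p \<in> ?B" using p by simp
    qed
    show "?g ` ?B \<subseteq> ?A"
    proof (rule image_subsetI)
      fix p assume a: "p \<in> ?B"
      obtain s D where p: "p = (s,D)" by fastforce
      have bb: "(s,D) \<in> ?B" using a p by simp
      have s: "0 < s" and f: "finite D" and D: "\<forall>x\<in>D. s<x \<and> (odd x \<longleftrightarrow> \<not> odd s)"
        and e: "int (j*s + \<Sum>D) = n - 2 * int j - 1" and c: "even (card D) \<longleftrightarrow> \<not> b"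
        and m: "s+1 \<in> D" using Binfo[OF bb] by auto
      have c1: "card D = Suc (card (D - {s+1}))" using m f
        by (metis card_Suc_Diff1)
      have s1: "\<Sum>D = (s+1) + \<Sum>(D - {s+1})" using m f by (simp add: sum.remove)
      have D2: "\<forall>x\<in>D - {s+1}. s+2<x \<and> (odd x \<longleftrightarrow> \<not> odd (s+2))"
      proof
        fix x assume x: "x \<in> D - {s+1}"
        then have "s < x" "x \<noteq> s+1" "odd x \<longleftrightarrow> \<not> odd s" using D by auto
        then show "s+2<x \<and> (odd x \<longleftrightarrow> \<not> odd (s+2))" by presburger
      qed
      have e2: "int (Suc j*(s+2) + \<Sum>(D - {s+1})) = n"
        using e unfolding s1 by (simp add: algebra_simps)
      have "(s+2, D - {s+1}) \<in> TT (Suc j) n b"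
        unfolding mem_TT using f D2 e2 c c1 by simp
      then show "?g p \<in> ?A" using p s by simp
    qed
  qed
qed

lemma L4: "card {p\<in>TT j n b. 3 \<le> fst p} = card {p\<in>TT j (n - 2 * int j) b. Suc (fst p) \<notin> snd p}"
proof (rule bij_betw_same_card[of "\<lambda>(t,D). (t-2, D)"])
  let ?A = "{p\<in>TT j n b. 3 \<le> fst p}"
  let ?B = "{p\<in>TT j (n - 2 * int j) b. Suc (fst p) \<notin> snd p}"
  let ?f = "\<lambda>(t,D). (t-2, D)"
  let ?g = "\<lambda>(s,D). (s+2, D)"
  have Ainfo: "3 \<le> t \<and> finite D \<and> (\<forall>x\<in>D. t<x \<and> (odd x \<longleftrightarrow> \<not> odd t)) \<and>
        int (j*t + \<Sum>D) = n \<and> (even (card D) \<longleftrightarrow> b)" if "(t,D) \<in> ?A" for t D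
  proof -
    have m: "(t,D) \<in> TT j n b" and t: "3 \<le> t" using that by auto
    show ?thesis using m t unfolding mem_TT by simp
  qed
  have Binfo: "0 < s \<and> finite D \<and> (\<forall>x\<in>D. s<x \<and> (odd x \<longleftrightarrow> \<not> odd s)) \<and>
        int (j*s + \<Sum>D) = n - 2 * int j \<and> (even (card D) \<longleftrightarrow> b) \<and> s+1 \<notin> D" if "(s,D) \<in> ?B" for s D
  proof -
    have m: "(s,D) \<in> TT j (n - 2 * int j) b" and t: "Suc s \<notin> D" using that by auto
    show ?thesis using m t unfolding mem_TT by simp
  qed
  show "bij_betw ?f ?A ?B"
  proof (rule bij_betw_byWitness[where f'="?g"])
    show "\<forall>a\<in>?A. ?g (?f a) = a"
    proof
      fix p assume a: "p \<in> ?A"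
      obtain t D where p: "p = (t,D)" by fastforce
      have "(t,D) \<in> ?A" using a p by simp
      note I = Ainfo[OF this]
      have "t - 2 + 2 = t" using I[THEN conjunct1] by auto
      then show "?g (?f p) = p" using p by simp
    qed
    show "\<forall>a\<in>?B. ?f (?g a) = a" by auto
    show "?f ` ?A \<subseteq> ?B"
    proof (rule image_subsetI)
      fix p assume a: "p \<in> ?A"
      obtain t D where p: "p = (t,D)" by fastforce
      have aa: "(t,D) \<in> ?A" using a p by simp
      have t: "3 \<le> t" and f: "finite D" and D: "\<forall>x\<in>D. t<x \<and> (odd x \<longleftrightarrow> \<not> odd t)"
        and e: "int (j*t + \<Sum>D) = n" and c: "even (card D) \<longleftrightarrow> b"
        using Ainfo[OF aa] by auto
      have nd: "Suc (t - 2) \<notin> D"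
      proof
        assume "Suc (t - 2) \<in> D" with D have "t < Suc (t - 2)" by blast
        then show False using t by simp
      qed
      have D2: "\<forall>x\<in>D. t-2<x \<and> (odd x \<longleftrightarrow> \<not> odd (t-2))"
      proof
        fix x assume "x \<in> D" then have "t<x" "odd x \<longleftrightarrow> \<not> odd t" using D by auto
        then show "t-2<x \<and> (odd x \<longleftrightarrow> \<not> odd (t-2))" using t by presburger
      qed
      have e2: "int (j*(t-2) + \<Sum>D) = n - 2 * int j"
      proof -
        define u where "u = t - 2"
        have u: "t = u + 2" using t u_def by simp
        have "int (j*(u+2) + \<Sum>D) = n" using e u by simp
        moreover have "j*(t-2) = j*u" using u by simp
        ultimately show ?thesis by (simp add: algebra_simps)
      qed
      have "(t-2, D) \<in> TT j (n - 2 * int j) b"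
        unfolding mem_TT using t f D2 e2 c by simp
      then show "?f p \<in> ?B" using p nd by simp
    qed
    show "?g ` ?B \<subseteq> ?A"
    proof (rule image_subsetI)
      fix p assume a: "p \<in> ?B"
      obtain s D where p: "p = (s,D)" by fastforce
      have bb: "(s,D) \<in> ?B" using a p by simp
      have s: "0 < s" and f: "finite D" and D: "\<forall>x\<in>D. s<x \<and> (odd x \<longleftrightarrow> \<not> odd s)"
        and e: "int (j*s + \<Sum>D) = n - 2 * int j" and c: "even (card D) \<longleftrightarrow> b"
        and m: "s+1 \<notin> D" using Binfo[OF bb] by auto
      have D2: "\<forall>x\<in>D. s+2<x \<and> (odd x \<longleftrightarrow> \<not> odd (s+2))"
      proof
        fix x assume x: "x \<in> D"
        then have "s < x" "x \<noteq> s+1" "odd x \<longleftrightarrow> \<not> odd s" using D m by auto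
        then show "s+2<x \<and> (odd x \<longleftrightarrow> \<not> odd (s+2))" by presburger
      qed
      have e2: "int (j*(s+2) + \<Sum>D) = n"
        using e by (simp add: algebra_simps)
      have "(s+2, D) \<in> TT j n b"
        unfolding mem_TT using f D2 e2 c by simp
      then show "?g p \<in> ?A" using p s by simp
    qed
  qed
qed

lemma ob: "(\<forall>x\<in>D. odd (x::nat) \<and> 1<x) \<longleftrightarrow> (\<forall>x\<in>D. odd x) \<and> 1 \<notin> D"
proof
  assume "\<forall>x\<in>D. odd x \<and> 1 < x" then show "(\<forall>x\<in>D. odd x) \<and> 1 \<notin> D" by auto
next
  assume a: "(\<forall>x\<in>D. odd x) \<and> 1 \<notin> D"
  show "\<forall>x\<in>D. odd x \<and> 1 < x"
  proof
    fix x assume "x \<in> D" then have "odd x" "x \<noteq> 1" using a by auto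
    then show "odd x \<and> 1 < x" using odd_gt1 by simp
  qed
qed

lemma O3_no1: "D \<in> O3 m c \<Longrightarrow> 1 \<notin> D"
proof
  assume d: "D \<in> O3 m c" and one: "1 \<in> D"
  from d have "\<forall>x\<in>D. odd x \<and> 1 < x" unfolding mem_O3 by blast
  then have "1 < (1::nat)" using one by blast
  then show False by simp
qed

lemma L5: "card (ODS m b) = card (O3 m b) + card (O3 (m - 1) (\<not> b))"
proof -
  have sp: "ODS m b = O3 m b \<union> {D\<in>ODS m b. 1 \<in> D}"
  proof (rule set_eqI)
    fix D show "D \<in> ODS m b \<longleftrightarrow> D \<in> O3 m b \<union> {D\<in>ODS m b. 1 \<in> D}"
      unfolding mem_ODS mem_O3 ob Un_iff mem_Collect_eq by blast
  qed
  have dj: "O3 m b \<inter> {D\<in>ODS m b. 1 \<in> D} = {}"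
  proof (rule equals0I)
    fix D assume "D \<in> O3 m b \<inter> {D\<in>ODS m b. 1 \<in> D}"
    then have d: "D \<in> O3 m b" and one: "1 \<in> D" by auto
    from d have "\<forall>x\<in>D. odd x \<and> 1 < x" unfolding mem_O3 by blast
    then have "1 < (1::nat)" using one by blast
    then show False by simp
  qed
  have "card (ODS m b) = card (O3 m b) + card {D\<in>ODS m b. 1 \<in> D}"
    by (subst sp, rule card_Un_disjoint) (use dj fin_OD[of m b] fin_O3[of m b] in auto)
  moreover have "card {D\<in>ODS m b. 1 \<in> D} = card (O3 (m - 1) (\<not> b))"
  proof (rule bij_betw_same_card[of "\<lambda>D. D - {1}"])
    show "bij_betw (\<lambda>D. D - {1}) {D\<in>ODS m b. 1 \<in> D} (O3 (m - 1) (\<not> b))"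
    proof (rule bij_betw_byWitness[where f'="insert 1"])
      show "\<forall>a\<in>{D\<in>ODS m b. 1 \<in> D}. insert 1 (a - {1}) = a" by auto
      show "\<forall>a'\<in>O3 (m - 1) (\<not> b). insert 1 a' - {1} = a'" using O3_no1 by auto
      show "(\<lambda>D. D - {1}) ` {D\<in>ODS m b. 1 \<in> D} \<subseteq> O3 (m - 1) (\<not> b)"
      proof (rule image_subsetI)
        fix D assume "D \<in> {D\<in>ODS m b. 1 \<in> D}"
        hence f: "finite D" and o: "\<forall>x\<in>D. odd x" and e: "int (\<Sum>D) = m" and c: "even (card D) \<longleftrightarrow> b"
          and m: "1 \<in> D" unfolding mem_Collect_eq mem_ODS by auto
        have c1: "card D = Suc (card (D - {1}))" using m f by (metis card_Suc_Diff1)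
        have s1: "\<Sum>D = 1 + \<Sum>(D - {1})" using m f by (simp add: sum.remove)
        have o2: "\<forall>x\<in>D - {1}. odd x \<and> 1 < x" unfolding ob using o by auto
        have e2: "int (\<Sum>(D - {1})) = m - 1" using e s1 by simp
        show "D - {1} \<in> O3 (m - 1) (\<not> b)" unfolding mem_O3 using f o2 e2 c c1 by auto
      qed
      show "insert 1 ` O3 (m - 1) (\<not> b) \<subseteq> {D\<in>ODS m b. 1 \<in> D}"
      proof (rule image_subsetI)
        fix D assume "D \<in> O3 (m - 1) (\<not> b)"
        hence f: "finite D" and o: "\<forall>x\<in>D. odd x" and nd: "1 \<notin> D" and e: "int (\<Sum>D) = m - 1" and c: "even (card D) \<longleftrightarrow> \<not> b"
          unfolding mem_O3 ob by auto
        have "insert 1 D \<in> ODS m b" unfolding mem_ODS using f o nd e c by simp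
        then show "insert 1 D \<in> {D\<in>ODS m b. 1 \<in> D}" by simp
      qed
    qed
  qed
  ultimately show ?thesis by simp
qed

lemma sum_mset_mset_set: "sum_mset (mset_set (D::nat set)) = \<Sum>D"
  using sum_unfold_sum_mset[of "\<lambda>x. x" D] by simp

lemma G:
  fixes j s :: nat and D :: "nat set"
  assumes j: "j \<ge> 1" and s: "0 < s" and f: "finite D" and D: "\<forall>x\<in>D. s<x"
  defines "M \<equiv> replicate_mset j s + mset_set D"
  shows "set_mset M = insert s D" and "smallest_part M = s" and "larger_parts M = card D"
    and "sum_mset M = j*s + \<Sum>D" and "count M s = j"
    and "\<And>x. s < x \<Longrightarrow> count M x = (if x \<in> D then 1 else 0)"
    and "M \<noteq> {#}" and "\<forall>x\<in>#M. 0 < x"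
proof -
  show sM: "set_mset M = insert s D" unfolding M_def using j f by auto
  show sp: "smallest_part M = s" unfolding smallest_part_def sM
    by (rule Min_eqI) (use f D in auto)
  have fl: "filter_mset (\<lambda>x. s < x) M = mset_set D"
  proof (rule multiset_eqI)
    fix x show "count (filter_mset (\<lambda>x. s < x) M) x = count (mset_set D) x"
      unfolding M_def using f D by (auto simp: count_mset_set')
  qed
  show "larger_parts M = card D" unfolding larger_parts_def sp fl using f by simp
  show "sum_mset M = j*s + \<Sum>D" unfolding M_def by (simp add: sum_mset_mset_set)
  have sD: "s \<notin> D" using D by auto
  show "count M s = j" unfolding M_def using sD by simp
  show "\<And>x. s < x \<Longrightarrow> count M x = (if x \<in> D then 1 else 0)"
    unfolding M_def using f by (auto simp: count_mset_set')
  show "M \<noteq> {#}" using sM by auto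
  show "\<forall>x\<in>#M. 0 < x" unfolding sM using s D by auto
qed

lemma LB:
  assumes j: "j \<ge> 1" and n: "0 < n"
  shows "card {\<pi> \<in> Spt_do j (nat n). even (larger_parts \<pi>) \<longleftrightarrow> c} = card (TT j n c)"
proof (rule bij_betw_same_card[of "\<lambda>\<pi>. (smallest_part \<pi>, set_mset \<pi> - {smallest_part \<pi>})"])
  let ?A = "{\<pi> \<in> Spt_do j (nat n). even (larger_parts \<pi>) \<longleftrightarrow> c}"
  let ?f = "\<lambda>\<pi>. (smallest_part \<pi>, set_mset \<pi> - {smallest_part \<pi>})"
  let ?g = "\<lambda>(s,D). replicate_mset j s + mset_set D"
  have Ainfo: "?g (?f \<pi>) = \<pi> \<and> ?f \<pi> \<in> TT j n c" if a: "\<pi> \<in> ?A" for \<pi>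
  proof -
    define s where "s = smallest_part \<pi>"
    define D where "D = set_mset \<pi> - {s}"
    have pos: "\<forall>x\<in>#\<pi>. 0 < x" and sm: "sum_mset \<pi> = nat n" and ne: "\<pi> \<noteq> {#}"
      and cs: "count \<pi> s = j"
      and big: "\<forall>x\<in>#\<pi>. s < x \<longrightarrow> count \<pi> x = 1 \<and> (odd x \<longleftrightarrow> \<not> odd s)"
      and ev: "even (larger_parts \<pi>) \<longleftrightarrow> c"
      using a unfolding Spt_do_def is_partition_def s_def by auto
    have sin: "s \<in># \<pi>" unfolding s_def smallest_part_def using ne by (simp add: Min_in)
    have sle: "\<forall>x\<in>#\<pi>. s \<le> x" unfolding s_def smallest_part_def by simp
    have s0: "0 < s" using pos sin by blast
    have f: "finite D" unfolding D_def by simp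
    have Dgt: "\<forall>x\<in>D. s < x" unfolding D_def using sle by force
    have eq: "replicate_mset j s + mset_set D = \<pi>"
    proof (rule multiset_eqI)
      fix x show "count (replicate_mset j s + mset_set D) x = count \<pi> x"
      proof (cases "x = s")
        case True then show ?thesis using cs by (simp add: D_def)
      next
        case False
        show ?thesis
        proof (cases "x \<in># \<pi>")
          case True
          then have "s < x" using sle False by force
          then have "count \<pi> x = 1" using big True by blast
          then show ?thesis using True False f by (simp add: D_def)
        next
          case F2: False
          then show ?thesis using False by (simp add: D_def count_mset_set' not_in_iff)
        qed
      qed
    qed
    note GG = G[OF j s0 f Dgt]
    have lp: "larger_parts \<pi> = card D" using GG(3) eq by simp
    have h: "nat n = j*s + \<Sum>D" using GG(4) eq sm by simp
    have sumeq: "int (j*s + \<Sum>D) = n" by (subst h[symmetric]) (use n in simp)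
    have par: "\<forall>x\<in>D. s<x \<and> (odd x \<longleftrightarrow> \<not> odd s)"
    proof
      fix x assume x: "x \<in> D"
      then have "s < x" using Dgt by blast
      moreover have "x \<in># \<pi>" using x unfolding D_def by simp
      ultimately show "s<x \<and> (odd x \<longleftrightarrow> \<not> odd s)" using big by blast
    qed
    have "(s, D) \<in> TT j n c" unfolding mem_TT using s0 f par sumeq ev lp by simp
    moreover have fp: "?f \<pi> = (s, D)" unfolding s_def D_def by simp
    ultimately show ?thesis using eq unfolding fp case_prod_conv by blast
  qed
  have Binfo: "?f (?g (s,D)) = (s,D) \<and> ?g (s,D) \<in> ?A" if b: "(s,D) \<in> TT j n c" for s D
  proof -
    have s0: "0 < s" and f: "finite D" and par: "\<forall>x\<in>D. s<x \<and> (odd x \<longleftrightarrow> \<not> odd s)"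
      and e: "int (j*s + \<Sum>D) = n" and c: "even (card D) \<longleftrightarrow> c" using b unfolding mem_TT by auto
    have Dgt: "\<forall>x\<in>D. s < x" using par by blast
    note GG = G[OF j s0 f Dgt]
    define M where "M = replicate_mset j s + mset_set D"
    have gM: "?g (s,D) = M" unfolding M_def by simp
    have sD: "s \<notin> D" using Dgt by auto
    have fM: "?f M = (s,D)" using GG(1,2) sD unfolding M_def by auto
    moreover have MA: "M \<in> ?A"
    proof -
      have nn: "nat n = j*s + \<Sum>D" by (metis e nat_int)
      have "is_partition (nat n) M" unfolding is_partition_def M_def using GG(8,4) nn by auto
      moreover have "\<forall>x\<in>#M. smallest_part M < x \<longrightarrow> count M x = 1 \<and> (odd x \<longleftrightarrow> \<not> odd (smallest_part M))"
      proof (intro ballI impI)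
        fix x assume x: "x \<in># M" and lt: "smallest_part M < x"
        have "s < x" using lt GG(2) unfolding M_def by simp
        moreover have "x \<in> D" using x \<open>s < x\<close> GG(1) unfolding M_def by auto
        ultimately show "count M x = 1 \<and> (odd x \<longleftrightarrow> \<not> odd (smallest_part M))"
          using GG(6)[of x] GG(2) par unfolding M_def by auto
      qed
      ultimately show ?thesis unfolding Spt_do_def M_def using GG(2,3,5,7) c by auto
    qed
    show ?thesis using gM fM MA by (simp only:)
  qed
  show "bij_betw ?f ?A (TT j n c)"
  proof (rule bij_betw_byWitness[where f'="?g"])
    show "\<forall>a\<in>?A. ?g (?f a) = a" using Ainfo by blast
    show "\<forall>a\<in>TT j n c. ?f (?g a) = a"
    proof
      fix a assume a: "a \<in> TT j n c"
      obtain s D where p: "a = (s,D)" by fastforce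
      have m: "(s,D) \<in> TT j n c" using a p by simp
      show "?f (?g a) = a" unfolding p by (rule conjunct1[OF Binfo[OF m]])
    qed
    show "?f ` ?A \<subseteq> TT j n c" using Ainfo by blast
    show "?g ` TT j n c \<subseteq> ?A"
    proof (rule image_subsetI)
      fix a assume a: "a \<in> TT j n c"
      obtain s D where p: "a = (s,D)" by fastforce
      have m: "(s,D) \<in> TT j n c" using a p by simp
      show "?g a \<in> ?A" unfolding p by (rule conjunct2[OF Binfo[OF m]])
    qed
  qed
qed

lemma TT_nonpos: assumes "j \<ge> 1" "n \<le> 0" shows "TT j n c = {}"
proof (rule equals0I)
  fix p assume a: "p \<in> TT j n c"
  obtain s D where p: "p = (s,D)" by fastforce
  have s: "0 < s" and e: "int (j*s + \<Sum>D) = n" using a unfolding p mem_TT by auto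
  have js: "j*s \<ge> 1" using assms(1) s by simp
  have "j*s + \<Sum>D \<ge> 1" using js by linarith
  hence "int (j*s + \<Sum>D) \<ge> 1" by (metis of_nat_1 of_nat_le_iff)
  then show False using e assms(2) by simp
qed

lemma B0_TT: "j \<ge> 1 \<Longrightarrow> B0 j n = card (TT j n True)"
  using LB[of j n True] TT_nonpos[of j n True] unfolding B0_def by auto

lemma B1_TT: "j \<ge> 1 \<Longrightarrow> B1 j n = card (TT j n False)"
  using LB[of j n False] TT_nonpos[of j n False] unfolding B1_def by auto

lemma card_split: "finite S \<Longrightarrow> card S = card {x\<in>S. P x} + card {x\<in>S. \<not> P x}"
proof -
  assume f: "finite S"
  have "S = {x\<in>S. P x} \<union> {x\<in>S. \<not> P x}" by auto
  moreover have "card ({x\<in>S. P x} \<union> {x\<in>S. \<not> P x}) = card {x\<in>S. P x} + card {x\<in>S. \<not> P x}"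
    by (rule card_Un_disjoint) (use f in auto)
  ultimately show ?thesis by simp
qed

lemma ie: "0 \<le> n \<Longrightarrow> (int x = n) \<longleftrightarrow> (x = nat n)" by auto

lemma EE_eq: assumes "0 \<le> n" shows "EE n c = {A\<in>{A. finite A \<and> (\<forall>x\<in>A. 0 < x \<and> even x) \<and> \<Sum>A = nat n}. even (card A) \<longleftrightarrow> c}"
proof (rule set_eqI)
  fix A show "A \<in> EE n c \<longleftrightarrow> A \<in> {A\<in>{A. finite A \<and> (\<forall>x\<in>A. 0 < x \<and> even x) \<and> \<Sum>A = nat n}. even (card A) \<longleftrightarrow> c}"
    unfolding mem_EE mem_Collect_eq ie[OF assms] by blast
qed

lemma ODS_eq: assumes "0 \<le> n" shows "ODS n c = {A\<in>{A. finite A \<and> (\<forall>x\<in>A. odd x) \<and> \<Sum>A = nat n}. even (card A) \<longleftrightarrow> c}"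
proof (rule set_eqI)
  fix A show "A \<in> ODS n c \<longleftrightarrow> A \<in> {A\<in>{A. finite A \<and> (\<forall>x\<in>A. odd x) \<and> \<Sum>A = nat n}. even (card A) \<longleftrightarrow> c}"
    unfolding mem_ODS mem_Collect_eq ie[OF assms] by blast
qed

lemma EE_neg: assumes "n < 0" shows "EE n c = {}"
proof (rule equals0I)
  fix A assume "A \<in> EE n c"
  then have "int (\<Sum>A) = n" unfolding mem_EE by blast
  moreover have "int (\<Sum>A) \<ge> 0" by (rule of_nat_0_le_iff)
  ultimately show False using assms by linarith
qed
lemma ODS_neg: assumes "n < 0" shows "ODS n c = {}"
proof (rule equals0I)
  fix A assume "A \<in> ODS n c"
  then have "int (\<Sum>A) = n" unfolding mem_ODS by blast
  moreover have "int (\<Sum>A) \<ge> 0" by (rule of_nat_0_le_iff)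
  ultimately show False using assms by linarith
qed

lemma p_de_EE: "p_de n = card (EE n True) + card (EE n False)"
proof (cases "n < 0")
  case True then show ?thesis unfolding p_de_def using EE_neg by simp
next
  case False
  let ?S = "{A. finite A \<and> (\<forall>x\<in>A. 0 < x \<and> even x) \<and> \<Sum>A = nat n}"
  have f: "finite ?S" by (rule finite_subset[OF _ fin_sets[of "nat n"]]) auto
  have n0: "0 \<le> n" using False by simp
  show ?thesis unfolding p_de_def EE_eq[OF n0] using False card_split[OF f, of "\<lambda>A. even (card A)"]
    by simp
qed

lemma p_do_ODS: "p_do n = card (ODS n True) + card (ODS n False)"
proof (cases "n < 0")
  case True then show ?thesis unfolding p_do_def using ODS_neg by simp
next
  case False
  let ?S = "{A. finite A \<and> (\<forall>x\<in>A. odd x) \<and> \<Sum>A = nat n}"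
  have f: "finite ?S" by (rule finite_subset[OF _ fin_sets[of "nat n"]]) auto
  have n0: "0 \<le> n" using False by simp
  show ?thesis unfolding p_do_def ODS_eq[OF n0] using False card_split[OF f, of "\<lambda>A. even (card A)"]
    by simp
qed

lemma p'_do_ODS: "p'_do n = int (card (ODS n True)) - int (card (ODS n False))"
proof (cases "n < 0")
  case True then show ?thesis unfolding p'_do_def using ODS_neg by simp
next
  case False
  have n0: "0 \<le> n" using False by simp
  show ?thesis unfolding p'_do_def ODS_eq[OF n0] using False by simp
qed

lemma TT_pos: "p \<in> TT j n c \<Longrightarrow> 0 < fst p"
proof -
  assume a: "p \<in> TT j n c"
  obtain s D where p: "p = (s,D)" by fastforce
  show ?thesis using a unfolding p mem_TT by simp
qed

lemma TT_split3: assumes j: "j\<ge>1" shows "card (TT j n c) = card {p\<in>TT j n c. fst p = 1} + card {p\<in>TT j n c. fst p = 2} + card {p\<in>TT j n c. 3 \<le> fst p}"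
proof -
  let ?A = "{p\<in>TT j n c. fst p = 1}"
  let ?B = "{p\<in>TT j n c. fst p = 2}"
  let ?C = "{p\<in>TT j n c. 3 \<le> fst p}"
  have f: "finite (TT j n c)" using fin_TT[OF j] .
  have eq: "TT j n c = (?A \<union> ?B) \<union> ?C"
  proof (rule set_eqI)
    fix p show "p \<in> TT j n c \<longleftrightarrow> p \<in> (?A \<union> ?B) \<union> ?C"
    proof
      assume pt: "p \<in> TT j n c"
      have "0 < fst p" using TT_pos[OF pt] .
      then show "p \<in> (?A \<union> ?B) \<union> ?C" using pt by auto
    qed auto
  qed
  have "card ((?A \<union> ?B) \<union> ?C) = card (?A \<union> ?B) + card ?C"
    by (rule card_Un_disjoint) (use f in auto)
  moreover have "card (?A \<union> ?B) = card ?A + card ?B"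
    by (rule card_Un_disjoint) (use f in auto)
  moreover have "card (TT j n c) = card ((?A \<union> ?B) \<union> ?C)" using eq by (rule arg_cong)
  ultimately show ?thesis by linarith
qed

lemma TT_split2: assumes j: "j\<ge>1" shows "card (TT j n c) = card {p\<in>TT j n c. Suc (fst p) \<in> snd p} + card {p\<in>TT j n c. Suc (fst p) \<notin> snd p}"
  using card_split[OF fin_TT[OF j], where P="\<lambda>p. Suc (fst p) \<in> snd p"] by simp

theorem theorem3p1:
  fixes k :: nat and n :: int
  assumes "k \<ge> 2" and "n \<ge> 1"
  shows "(spt'_do (k - 1) (n - 1) - spt'_do k n
           = spt'_do (k - 1) (n - 2 * int k + 1) + p'_do (n - 2 * int k + 1)) \<and>
         (spt_do k n + spt_do (k - 1) (n - 1)
           = spt_do (k - 1) (n - 2 * int k + 1) + 2 * p_de (n - int k) + p_do (n - 2 * int k + 1))"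
proof -
  obtain j where k: "k = Suc j" using assms(1) by (cases k) auto
  have j: "j \<ge> 1" using assms(1) k by simp
  have k1: "k \<ge> 1" using k by simp
  have kj: "k - 1 = j" using k by simp
  have e1: "n - 2 * int j - 1 = n - 2 * int k + 1" using k by simp
  have e2: "n - 1 - int j = n - int k" using k by simp
  have e3: "n - 1 - 2 * int j = n - 2 * int k + 1" using k by simp
  have e4: "n - 2 * int k + 1 - 1 = n - 2 * int k" by simp
  let ?X1 = "n - int k" and ?X2 = "n - 2 * int k" and ?X3 = "n - 2 * int k + 1"
  have A: "card (TT k n c) = card (EE ?X1 c) + card (O3 ?X2 c)
       + card {p\<in>TT j ?X3 (\<not>c). Suc (fst p) \<in> snd p}" for c
    using TT_split3[OF k1, of n c] L1[of k n c] L2[of k n c] L3[of j n c, unfolded e1, folded k] by simp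
  have B: "card (TT j (n-1) c) = card (EE ?X1 c) + card (O3 ?X3 c)
       + card {p\<in>TT j ?X3 c. Suc (fst p) \<notin> snd p}" for c
    using TT_split3[OF j, of "n-1" c] L1[of j "n-1" c, unfolded e2] L2[of j "n-1" c, unfolded e3]
      L4[of j "n-1" c, unfolded e3] by simp
  have C: "card (TT j ?X3 c) = card {p\<in>TT j ?X3 c. Suc (fst p) \<in> snd p} + card {p\<in>TT j ?X3 c. Suc (fst p) \<notin> snd p}" for c
    using TT_split2[OF j, of ?X3 c] .
  have O: "card (ODS ?X3 c) = card (O3 ?X3 c) + card (O3 ?X2 (\<not> c))" for c
    using L5[of ?X3 c, unfolded e4] .
  note defs = spt'_do_def spt_do_def p'_do_ODS p_do_ODS p_de_EE B0_TT[OF j] B1_TT[OF j] B0_TT[OF k1] B1_TT[OF k1] kj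
  show ?thesis unfolding defs
    using A[of True] A[of False] B[of True] B[of False] C[of True] C[of False] O[of True] O[of False]
    by simp
qed

end
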